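(* Let $A$ be a vertex of a cube $\mathcal C$ and let $S$ be the union of the three faces of $\mathcal C$ not containing $A$. If $f\colon\mathcal C\to\mathbb{R}$ is convex, then $$\operatorname{Avg}(f,\mathcal C)\le\frac14f(A)+\frac34\operatorname{Avg}(f,S),\qquad \operatorname{Avg}(f,h_A^{3/4}(S))\le\operatorname{Avg}(f,\mathcal C).$$
   Context: $\operatorname{Avg}(f,\mathcal C)$ is the average over the cube with respect to volume; averages over $S$ and $h_A^{3/4}(S)$ are with respect to surface area. $h_A^\lambda(\mathbf x)=A+\lambda(\mathbf x-A)$ is the homothety with center $A$ and ratio $\lambda$. *)

theory Defs
  imports "HOL-Analysis.Analysis"
begin

definition cube :: "real^3 \<Rightarrow> real^3 \<Rightarrow> real^3 \<Rightarrow> real^3 \<Rightarrow> (real^3) set" where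
  "cube A u v w = {A + s *\<^sub>R u + t *\<^sub>R v + r *\<^sub>R w | s t r.
      s \<in> {0..1} \<and> t \<in> {0..1} \<and> r \<in> {0..1}}"

definition vol_avg :: "(real^3 \<Rightarrow> real) \<Rightarrow> (real^3) set \<Rightarrow> real" where
  "vol_avg f K = integral K f / measure lebesgue K"

text \<open>A flat parallelogram face given by a corner P and edge vectors x, y:
  the set {P + s x + t y | s,t in [0,1]}.\<close>
type_synonym face = "(real^3) \<times> (real^3) \<times> (real^3)"

definition face_param :: "face \<Rightarrow> real \<times> real \<Rightarrow> real^3" where
  "face_param F st = (\<lambda>(P, x, y). P + fst st *\<^sub>R x + snd st *\<^sub>R y) F"

text \<open>Surface area of the face (= Jacobian of the affine parametrization).\<close>
definition face_area :: "face \<Rightarrow> real" where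
  "face_area F = (\<lambda>(P, x, y). sqrt ((norm x)\<^sup>2 * (norm y)\<^sup>2 - (x \<bullet> y)\<^sup>2)) F"

definition face_integral :: "(real^3 \<Rightarrow> real) \<Rightarrow> face \<Rightarrow> real" where
  "face_integral f F = face_area F * integral (cbox (0,0) (1,1)) (\<lambda>st. f (face_param F st))"

text \<open>Average of f with respect to surface area over a polyhedral surface which is the
  union of the given faces (the faces are assumed to overlap only in null sets, i.e. edges).\<close>
definition surface_avg :: "(real^3 \<Rightarrow> real) \<Rightarrow> face list \<Rightarrow> real" where
  "surface_avg f Fs = (\<Sum>F\<leftarrow>Fs. face_integral f F) / (\<Sum>F\<leftarrow>Fs. face_area F)"

text \<open>The three faces of the cube not containing the vertex A (their union is S).\<close>
definition far_faces :: "real^3 \<Rightarrow> real^3 \<Rightarrow> real^3 \<Rightarrow> real^3 \<Rightarrow> face list" where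
  "far_faces A u v w = [(A + u, v, w), (A + v, u, w), (A + w, u, v)]"

definition homothety :: "real^3 \<Rightarrow> real \<Rightarrow> real^3 \<Rightarrow> real^3" where
  "homothety A lam x = A + lam *\<^sub>R (x - A)"

definition homothety_face :: "real^3 \<Rightarrow> real \<Rightarrow> face \<Rightarrow> face" where
  "homothety_face A lam F = (\<lambda>(P, x, y). (homothety A lam P, lam *\<^sub>R x, lam *\<^sub>R y)) F"

lemma face_param_homothety:
  "face_param (homothety_face A lam F) st = homothety A lam (face_param F st)"
  by (cases F) (auto simp: face_param_def homothety_face_def homothety_def algebra_simps)

end

theory Submission
  imports Defs
begin


lemma integrable_open_bounded:
  fixes g :: "'a::euclidean_space \<Rightarrow> real"
  assumes "open Om" "bounded Om" "continuous_on Om g" "\<And>x. x \<in> Om \<Longrightarrow> \<bar>g x\<bar> \<le> B"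
  shows "integrable lborel (\<lambda>x. indicator Om x * g x)"
proof -
  have m: "(\<lambda>x. indicator Om x *\<^sub>R g x) \<in> borel_measurable borel"
    by (rule borel_measurable_continuous_on_indicator) (use assms in auto)
  have "integrable lborel (\<lambda>x. indicator Om x *\<^sub>R g x)"
    by (rule integrableI_bounded_set[where A=Om and B=B])
       (use assms m emeasure_bounded_finite in \<open>auto simp: indicator_def\<close>)
  then show ?thesis by simp
qed

lemma has_integral_open_bounded:
  fixes g :: "'a::euclidean_space \<Rightarrow> real"
  assumes "open Om" "bounded Om" "continuous_on Om g" "\<And>x. x \<in> Om \<Longrightarrow> \<bar>g x\<bar> \<le> B"
  shows "(g has_integral (integral\<^sup>L lborel (\<lambda>x. indicator Om x * g x))) Om"
proof -
  have "((\<lambda>x. indicator Om x * g x) has_integral (integral\<^sup>L lborel (\<lambda>x. indicator Om x * g x))) UNIV"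
    by (rule has_integral_integral_lborel[OF integrable_open_bounded[OF assms]])
  moreover have "(\<lambda>x. indicator Om x * g x) = (\<lambda>x. if x \<in> Om then g x else 0)"
    by (auto simp: indicator_def)
  ultimately show ?thesis by (simp add: has_integral_restrict_UNIV)
qed

lemma convex_box_integrable:
  fixes G :: "'a::euclidean_space \<Rightarrow> real"
  assumes "convex_on (cbox a b) G" "\<And>x. x \<in> cbox a b \<Longrightarrow> \<bar>G x\<bar> \<le> B"
  shows "G integrable_on cbox a b"
proof -
  have "continuous_on (box a b) G"
    by (rule convex_on_continuous) (use convex_on_subset[OF assms(1) box_subset_cbox] in \<open>auto simp: convex_box\<close>)
  then have "G integrable_on box a b"
    using has_integral_open_bounded[of "box a b" G B] assms box_subset_cbox bounded_box by blast
  then show ?thesis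
    by (metis has_integral_integrable_integral has_integral_open_interval)
qed

lemma has_integral_pow01:
  "((\<lambda>s::real. s ^ n) has_integral (1 / real (Suc n))) {0..1}"
proof -
  have "((\<lambda>s::real. s ^ n) has_integral ((\<lambda>s. s ^ Suc n / real (Suc n)) 1 - (\<lambda>s. s ^ Suc n / real (Suc n)) 0)) {0..1}"
  proof (rule fundamental_theorem_of_calculus)
    fix x :: real
    show "((\<lambda>s. s ^ Suc n / real (Suc n)) has_vector_derivative x ^ n) (at x within {0..1})"
      unfolding has_real_derivative_iff_has_vector_derivative[symmetric]
      by (rule derivative_eq_intros refl | simp)+
  qed simp
  then show ?thesis by simp
qed

lemma convex_subgradient:
  fixes \<phi> :: "real \<Rightarrow> real"
  assumes cv: "convex_on {a..b} \<phi>" and ac: "a < c" and cb: "c < b"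
  obtains m where "\<And>s. s \<in> {a..b} \<Longrightarrow> \<phi> c + m * (s - c) \<le> \<phi> s"
proof -
  have slope: "(\<phi> c - \<phi> s1) / (c - s1) \<le> (\<phi> s2 - \<phi> c) / (s2 - c)"
    if "a \<le> s1" "s1 < c" "c < s2" "s2 \<le> b" for s1 s2
  proof -
    have "(\<phi> s1 - \<phi> c) / (s1 - c) \<le> (\<phi> s1 - \<phi> s2) / (s1 - s2)"
      "(\<phi> s1 - \<phi> s2) / (s1 - s2) \<le> (\<phi> c - \<phi> s2) / (c - s2)"
      using convex_on_slope_le[OF cv, of s1 s2 c] that by auto
    moreover have "(\<phi> s1 - \<phi> c) / (s1 - c) = (\<phi> c - \<phi> s1) / (c - s1)"
      by (metis minus_diff_eq minus_divide_divide)
    moreover have "(\<phi> c - \<phi> s2) / (c - s2) = (\<phi> s2 - \<phi> c) / (s2 - c)"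
      by (metis minus_diff_eq minus_divide_divide)
    ultimately show ?thesis by linarith
  qed
  define Sl where "Sl = (\<lambda>s. (\<phi> c - \<phi> s) / (c - s)) ` {a..<c}"
  define m where "m = Sup Sl"
  have ne: "Sl \<noteq> {}" using ac by (auto simp: Sl_def)
  have bdd: "bdd_above Sl"
    unfolding Sl_def bdd_above_def using slope[of _ b] cb by (auto intro!: exI[of _ "(\<phi> b - \<phi> c) / (b - c)"])
  have "\<phi> c + m * (s - c) \<le> \<phi> s" if s: "s \<in> {a..b}" for s
  proof (cases s c rule: linorder_cases)
    case less
    have "(\<phi> c - \<phi> s) / (c - s) \<le> m"
      unfolding m_def by (rule cSup_upper[OF _ bdd]) (use s less in \<open>auto simp: Sl_def\<close>)
    then have "\<phi> c - \<phi> s \<le> m * (c - s)"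
      using less by (simp add: divide_le_eq)
    then show ?thesis by (simp add: algebra_simps)
  next
    case equal then show ?thesis by simp
  next
    case greater
    have "m \<le> (\<phi> s - \<phi> c) / (s - c)"
      unfolding m_def by (rule cSup_least[OF ne]) (use s greater slope in \<open>auto simp: Sl_def\<close>)
    then have "m * (s - c) \<le> \<phi> s - \<phi> c"
      using greater by (simp add: le_divide_eq)
    then show ?thesis by (simp add: algebra_simps)
  qed
  then show ?thesis using that by blast
qed

lemma jensen34:
  fixes \<phi> :: "real \<Rightarrow> real"
  assumes cv: "convex_on {0..1} \<phi>" and int: "(\<lambda>s. s^2 * \<phi> s) integrable_on {0..1}"
  shows "\<phi> (3/4) \<le> 3 * integral {0..1} (\<lambda>s. s^2 * \<phi> s)"
proof -
  obtain m where m: "\<And>s. s \<in> {0..1} \<Longrightarrow> \<phi> (3/4) + m * (s - 3/4) \<le> \<phi> s"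
    using convex_subgradient[OF cv, of "3/4"] by auto
  have h: "((\<lambda>s. \<phi> (3/4) * s^2 + m * s^3 - (3/4 * m) * s^2) has_integral
      (\<phi> (3/4) * (1/3) + m * (1/4) - (3/4*m) * (1/3))) {0..1}"
    by (intro has_integral_diff has_integral_add has_integral_mult_right has_integral_pow01[of 2, simplified]
        has_integral_pow01[of 3, simplified])
  have "integral {0..1} (\<lambda>s. \<phi> (3/4) * s^2 + m * s^3 - (3/4 * m) * s^2) \<le> integral {0..1} (\<lambda>s. s^2 * \<phi> s)"
  proof (rule integral_le)
    show "(\<lambda>s. \<phi> (3/4) * s^2 + m * s^3 - (3/4 * m) * s^2) integrable_on {0..1}" using h by blast
    show "(\<lambda>s. s^2 * \<phi> s) integrable_on {0..1}" by (fact int)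
    fix s :: real assume s: "s \<in> {0..1}"
    have "s^2 * (\<phi> (3/4) + m * (s - 3/4)) \<le> s^2 * \<phi> s"
      using m[OF s] by (intro mult_left_mono) auto
    then show "\<phi> (3/4) * s^2 + m * s^3 - (3/4 * m) * s^2 \<le> s^2 * \<phi> s"
      by (simp add: algebra_simps power2_eq_square power3_eq_cube)
  qed
  then show ?thesis using integral_unique[OF h] by simp
qed


lemma box_Pair_eq': "box (a, c) (b, d) = box a b \<times> box c d"
  by (auto simp: mem_box Basis_prod_def ball_Un inner_Pair_0)

lemma box_real_Pair: "box ((a::real), (c::real)) (b, d) = {a<..<b} \<times> {c<..<d}"
  by (simp add: box_Pair_eq')

lemma box3_eq: "box ((a::real), (c::real), (e::real)) (b, d, f) = {a<..<b} \<times> {c<..<d} \<times> {e<..<f}"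
  by (simp add: box_Pair_eq')

lemma cbox3_eq: "cbox ((a::real), (c::real), (e::real)) (b, d, f) = {a..b} \<times> {c..d} \<times> {e..f}"
  by (simp add: cbox_Pair_eq)

lemma negligible_hyperplane3:
  assumes "(a, b, c) \<noteq> (0::real, 0::real, 0::real)"
  shows "negligible {p :: real \<times> real \<times> real. a * fst p + b * fst (snd p) + c * snd (snd p) = d}"
proof -
  have "negligible {p. (a, b, c) \<bullet> p = d}"
    by (rule negligible_hyperplane) (use assms in \<open>auto simp: zero_prod_def\<close>)
  moreover have "{p. (a, b, c) \<bullet> p = d} = {p :: real \<times> real \<times> real. a * fst p + b * fst (snd p) + c * snd (snd p) = d}"
    by (auto simp: inner_prod_def)
  ultimately show ?thesis by simp
qed


definition U3 :: "(real \<times> real \<times> real) set" where "U3 = cbox (0,0,0) (1,1,1)"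
definition D1 :: "(real \<times> real \<times> real) set" where
  "D1 = {p \<in> U3. fst (snd p) \<le> fst p \<and> snd (snd p) \<le> fst p}"

lemma pyr:
  fixes g :: "real \<times> real \<times> real \<Rightarrow> real"
  assumes cv: "convex_on U3 g" and bnd: "\<And>p. p \<in> U3 \<Longrightarrow> \<bar>g p\<bar> \<le> B"
  defines "\<Phi> \<equiv> \<lambda>s. integral (cbox (0,0) (1,1)) (\<lambda>q. g (s, s * fst q, s * snd q))"
  shows "(g has_integral integral {0..1} (\<lambda>s. s^2 * \<Phi> s)) D1"
    and "(\<lambda>s. s^2 * \<Phi> s) integrable_on {0..1}"
proof -
  define Om where "Om = {p :: real \<times> real \<times> real. 0 < fst p \<and> fst p < 1 \<and> 0 < fst (snd p) \<and> fst (snd p) < fst p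
     \<and> 0 < snd (snd p) \<and> snd (snd p) < fst p}"
  define B3 where "B3 = box (0::real,0::real,0::real) (1,1,1)"
  have B3U: "B3 \<subseteq> U3" unfolding B3_def U3_def by (rule box_subset_cbox)
  have contB3: "continuous_on B3 g"
    by (rule convex_on_continuous) (use convex_on_subset[OF cv B3U] in \<open>auto simp: B3_def convex_box\<close>)
  have OmB3: "Om \<subseteq> B3" unfolding Om_def B3_def box3_eq by auto
  have openOm: "open Om" unfolding Om_def
    by (intro open_Collect_conj open_Collect_less continuous_intros)
  have bddOm: "bounded Om" using OmB3 bounded_subset[of B3 Om] by (simp add: B3_def)
  have contOm: "continuous_on Om g" using contB3 OmB3 continuous_on_subset by blast
  have bndOm: "\<And>p. p \<in> Om \<Longrightarrow> \<bar>g p\<bar> \<le> B" using bnd OmB3 B3U by blast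
  define h where "h = (\<lambda>x. indicator Om x * g x)"
  define LI where "LI = integral\<^sup>L lborel h"
  have intOm: "(g has_integral LI) Om"
    unfolding LI_def h_def by (rule has_integral_open_bounded[OF openOm bddOm contOm bndOm])
  have hint: "integrable lborel h"
    unfolding h_def by (rule integrable_open_bounded[OF openOm bddOm contOm bndOm])
  have inner: "(LBINT q. h (s, q)) = indicator {0<..<1} s * (s^2 * \<Phi> s)" for s
  proof (cases "0 < s \<and> s < 1")
    case False
    then have "h (s, q) = 0" for q by (auto simp: h_def Om_def)
    then show ?thesis using False by simp
  next
    case True
    define Bs where "Bs = box (0::real,0::real) (s,s)"
    have hs: "h (s, q) = indicator Bs q * g (s, q)" for q
      using True by (auto simp: h_def Om_def Bs_def box_real_Pair indicator_def mem_Times_iff)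
    have contBs: "continuous_on Bs (\<lambda>q. g (s, q))"
    proof (rule continuous_on_compose2[OF contB3])
      show "continuous_on Bs (Pair s)" by (intro continuous_intros)
      show "Pair s ` Bs \<subseteq> B3" using True by (auto simp: Bs_def B3_def box_real_Pair box3_eq)
    qed
    have bndBs: "\<And>q. q \<in> Bs \<Longrightarrow> \<bar>g (s, q)\<bar> \<le> B"
      using True bnd by (auto simp: Bs_def U3_def box_real_Pair cbox3_eq)
    have I1: "((\<lambda>q. g (s, q)) has_integral (LBINT q. h (s, q))) (cbox (0,0) (s,s))"
      using has_integral_open_bounded[of Bs "\<lambda>q. g (s, q)" B] contBs bndBs
      by (simp add: hs Bs_def has_integral_open_interval open_box)
    have I2: "((\<lambda>x. g (s, s *\<^sub>R x + 0)) has_integral (1 / \<bar>s\<bar> ^ DIM(real \<times> real)) *\<^sub>R (LBINT q. h (s, q)))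
       ((\<lambda>x. (1 / s) *\<^sub>R x + - ((1 / s) *\<^sub>R 0)) ` cbox (0,0) (s,s))"
      by (rule has_integral_affinity[OF I1]) (use True in auto)
    have img: "((\<lambda>x. (1 / s) *\<^sub>R x + - ((1 / s) *\<^sub>R 0)) ` cbox (0,0) (s,s)) = cbox (0,0) (1,1)"
    proof
      show "((\<lambda>x. (1 / s) *\<^sub>R x + - ((1 / s) *\<^sub>R 0)) ` cbox (0,0) (s,s)) \<subseteq> cbox (0,0) (1,1)"
        using True by (auto simp: cbox_Pair_eq divide_simps zero_le_mult_iff)
      show "cbox (0,0) (1,1) \<subseteq> ((\<lambda>x. (1 / s) *\<^sub>R x + - ((1 / s) *\<^sub>R 0)) ` cbox (0,0) (s,s))"
      proof
        fix y :: "real \<times> real" assume y: "y \<in> cbox (0,0) (1,1)"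
        show "y \<in> ((\<lambda>x. (1 / s) *\<^sub>R x + - ((1 / s) *\<^sub>R 0)) ` cbox (0,0) (s,s))"
        proof (rule image_eqI[of _ _ "s *\<^sub>R y"])
          show "y = (1 / s) *\<^sub>R (s *\<^sub>R y) + - ((1 / s) *\<^sub>R 0)" using True by simp
          show "s *\<^sub>R y \<in> cbox (0,0) (s,s)"
            using True y by (cases y) (auto simp: cbox_Pair_eq mult_left_le)
        qed
      qed
    qed
    have eqf: "(\<lambda>x. g (s, s *\<^sub>R x + 0)) = (\<lambda>q. g (s, s * fst q, s * snd q))"
      by (auto simp: scaleR_prod_def)
    have "\<Phi> s = (1 / s^2) * (LBINT q. h (s, q))"
      using I2 unfolding img eqf \<Phi>_def using True by (simp add: integral_unique power2_eq_square)
    then show ?thesis using True by (simp add: field_simps)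
  qed
  have hint2: "integrable (lborel \<Otimes>\<^sub>M lborel) h" using hint by (simp add: lborel_prod)
  have outer_int: "integrable lborel (\<lambda>s. indicator {0<..<1} s * (s^2 * \<Phi> s))"
    using lborel_pair.integrable_fst'[OF hint2] by (simp add: inner)
  have LIeq: "LI = (LBINT s. indicator {0<..<1} s * (s^2 * \<Phi> s))"
    using lborel_pair.integral_fst'[OF hint2] by (simp add: inner LI_def lborel_prod)
  have HU: "((\<lambda>s. indicator {0<..<1} s * (s^2 * \<Phi> s)) has_integral LI) UNIV"
    unfolding LIeq by (rule has_integral_integral_lborel[OF outer_int])
  have eqf: "(\<lambda>s. indicator {0<..<1} s * (s^2 * \<Phi> s)) = (\<lambda>s. if s \<in> {0<..<1} then s^2 * \<Phi> s else 0)"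
    by (auto simp: indicator_def)
  have "((\<lambda>s. if s \<in> {0<..<1} then s^2 * \<Phi> s else 0) has_integral LI) UNIV"
    using HU unfolding eqf .
  then have "((\<lambda>s. s^2 * \<Phi> s) has_integral LI) {0<..<1}"
    unfolding has_integral_restrict_UNIV .
  then have HI: "((\<lambda>s. s^2 * \<Phi> s) has_integral LI) {0..1}"
    by (metis box_real(1) cbox_interval has_integral_open_interval)
  then show "(\<lambda>s. s^2 * \<Phi> s) integrable_on {0..1}" by blast
  have LI2: "integral {0..1} (\<lambda>s. s^2 * \<Phi> s) = LI" using HI by (simp add: integral_unique)
  have sub: "Om \<subseteq> D1" unfolding Om_def D1_def U3_def cbox3_eq by auto
  have neg: "negligible (D1 - Om)"
  proof (rule negligible_subset)
    let ?H = "\<lambda>a b c d. {p :: real \<times> real \<times> real. a * fst p + b * fst (snd p) + c * snd (snd p) = d}"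
    show "negligible (?H 1 0 0 0 \<union> ?H 1 0 0 1 \<union> ?H 0 1 0 0 \<union> ?H (-1) 1 0 0 \<union> ?H 0 0 1 0 \<union> ?H (-1) 0 1 0)"
      by (intro negligible_Un negligible_hyperplane3) auto
    show "D1 - Om \<subseteq> ?H 1 0 0 0 \<union> ?H 1 0 0 1 \<union> ?H 0 1 0 0 \<union> ?H (-1) 1 0 0 \<union> ?H 0 0 1 0 \<union> ?H (-1) 0 1 0"
      unfolding Om_def D1_def U3_def cbox3_eq by auto
  qed
  have n1: "negligible {x \<in> Om - D1. g x \<noteq> 0}"
  proof -
    have "{x \<in> Om - D1. g x \<noteq> 0} = {}" using sub by blast
    then show ?thesis by (metis negligible_empty)
  qed
  have n2: "negligible {x \<in> D1 - Om. g x \<noteq> 0}"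
    by (rule negligible_subset[OF neg]) blast
  show "(g has_integral integral {0..1} (\<lambda>s. s^2 * \<Phi> s)) D1"
    unfolding LI2 using has_integral_spike_set_eq[OF n1 n2] intOm by blast
qed


lemma image_inv_eq:
  assumes "\<And>x. s (t x) = x" "\<And>x. t (s x) = x"
  shows "s ` A = {x. t x \<in> A}"
  using assms by (auto simp: image_iff) (metis)

lemma perm_transfer:
  fixes g :: "real \<times> real \<times> real \<Rightarrow> real" and \<sigma> \<tau> :: "real \<times> real \<times> real \<Rightarrow> real \<times> real \<times> real"
  assumes st: "\<And>x. \<sigma> (\<tau> x) = x" and ts: "\<And>x. \<tau> (\<sigma> x) = x"
    and ct: "\<And>x. continuous (at x) \<tau>"
    and bs: "\<And>u v. \<exists>w z. \<sigma> ` cbox u v = cbox w z"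
    and bt: "\<And>u v. \<exists>w z. \<tau> ` cbox u v = cbox w z"
    and ctt: "\<And>u v. Henstock_Kurzweil_Integration.content (\<tau> ` cbox u v) = Henstock_Kurzweil_Integration.content (cbox u v)"
    and sU: "\<sigma> ` U3 = U3" and DU: "D \<subseteq> U3"
    and I: "((\<lambda>x. g (\<sigma> x)) has_integral i) D"
  shows "(g has_integral i) (\<sigma> ` D)"
proof -
  define F where "F = (\<lambda>x. if x \<in> D then g (\<sigma> x) else 0)"
  have "(F has_integral i) U3"
    unfolding F_def using has_integral_restrict[OF DU, of "\<lambda>x. g (\<sigma> x)" i] I by simp
  then have "((\<lambda>x. F (\<tau> x)) has_integral (1 / 1) *\<^sub>R i) (\<sigma> ` U3)"
    unfolding U3_def
    by (intro has_integral_twiddle[where g=\<tau> and h=\<sigma> and r=1]) (use st ts ct bs bt ctt in auto)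
  then have "((\<lambda>x. if x \<in> \<sigma> ` D then g x else 0) has_integral i) U3"
  proof -
    have e: "(\<lambda>x. F (\<tau> x)) = (\<lambda>x. if x \<in> \<sigma> ` D then g x else 0)"
      by (rule ext) (simp add: F_def image_inv_eq[OF st ts] st)
    show ?thesis using \<open>((\<lambda>x. F (\<tau> x)) has_integral (1 / 1) *\<^sub>R i) (\<sigma> ` U3)\<close> unfolding e sU by simp
  qed
  moreover have "\<sigma> ` D \<subseteq> U3" using DU sU by blast
  ultimately show ?thesis using has_integral_restrict by blast
qed


lemma mem_cbox3: "x \<in> cbox u v \<longleftrightarrow> fst u \<le> fst x \<and> fst x \<le> fst v \<and> fst (snd u) \<le> fst (snd x) \<and> fst (snd x) \<le> fst (snd v)
   \<and> snd (snd u) \<le> snd (snd x) \<and> snd (snd x) \<le> snd (snd v)"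
  for x u v :: "real \<times> real \<times> real"
  by (cases u; cases v; cases x) (auto simp: cbox_Pair_eq)

lemma content3: "Henstock_Kurzweil_Integration.content (cbox u v) =
   Henstock_Kurzweil_Integration.content (cbox (fst u) (fst v)) *
  (Henstock_Kurzweil_Integration.content (cbox (fst (snd u)) (fst (snd v))) *
   Henstock_Kurzweil_Integration.content (cbox (snd (snd u)) (snd (snd v))))"
  for u v :: "real \<times> real \<times> real"
  by (cases u; cases v) (simp add: content_Pair)

lemma convex_on_perm:
  fixes \<sigma> :: "real \<times> real \<times> real \<Rightarrow> real \<times> real \<times> real"
  assumes cv: "convex_on U3 g" and lin: "\<And>x y u v. \<sigma> (u *\<^sub>R x + v *\<^sub>R y) = u *\<^sub>R \<sigma> x + v *\<^sub>R \<sigma> y"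
    and inU: "\<And>x. x \<in> U3 \<Longrightarrow> \<sigma> x \<in> U3"
  shows "convex_on U3 (\<lambda>x. g (\<sigma> x))"
  using cv unfolding convex_on_def by (simp add: lin inU)

definition \<sigma>2 :: "real \<times> real \<times> real \<Rightarrow> real \<times> real \<times> real" where
  "\<sigma>2 p = (fst (snd p), fst p, snd (snd p))"
definition \<sigma>3 :: "real \<times> real \<times> real \<Rightarrow> real \<times> real \<times> real" where
  "\<sigma>3 p = (fst (snd p), snd (snd p), fst p)"
definition \<tau>3 :: "real \<times> real \<times> real \<Rightarrow> real \<times> real \<times> real" where
  "\<tau>3 p = (snd (snd p), fst p, fst (snd p))"

lemma core:
  fixes g :: "real \<times> real \<times> real \<Rightarrow> real"
  assumes cv: "convex_on U3 g" and bnd: "\<And>p. p \<in> U3 \<Longrightarrow> \<bar>g p\<bar> \<le> B"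
  defines "\<Phi>1 \<equiv> \<lambda>s. integral (cbox (0,0) (1,1)) (\<lambda>q. g (s, s * fst q, s * snd q))"
    and "\<Phi>2 \<equiv> \<lambda>s. integral (cbox (0,0) (1,1)) (\<lambda>q. g (s * fst q, s, s * snd q))"
    and "\<Phi>3 \<equiv> \<lambda>s. integral (cbox (0,0) (1,1)) (\<lambda>q. g (s * fst q, s * snd q, s))"
  shows "(g has_integral (integral {0..1} (\<lambda>s. s^2 * \<Phi>1 s) + integral {0..1} (\<lambda>s. s^2 * \<Phi>2 s)
      + integral {0..1} (\<lambda>s. s^2 * \<Phi>3 s))) U3"
    and "(\<lambda>s. s^2 * \<Phi>1 s) integrable_on {0..1}"
    and "(\<lambda>s. s^2 * \<Phi>2 s) integrable_on {0..1}"
    and "(\<lambda>s. s^2 * \<Phi>3 s) integrable_on {0..1}"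
proof -
  have s22: "\<sigma>2 (\<sigma>2 x) = x" for x by (simp add: \<sigma>2_def)
  have s3t: "\<sigma>3 (\<tau>3 x) = x" for x by (simp add: \<sigma>3_def \<tau>3_def)
  have t3s: "\<tau>3 (\<sigma>3 x) = x" for x by (simp add: \<sigma>3_def \<tau>3_def)
  have i2: "\<sigma>2 ` cbox u v = cbox (\<sigma>2 u) (\<sigma>2 v)" for u v
    unfolding image_inv_eq[of \<sigma>2 \<sigma>2, OF s22 s22] by (auto simp: mem_cbox3 \<sigma>2_def)
  have i3: "\<sigma>3 ` cbox u v = cbox (\<sigma>3 u) (\<sigma>3 v)" for u v
    unfolding image_inv_eq[of \<sigma>3 \<tau>3, OF s3t t3s] by (auto simp: mem_cbox3 \<sigma>3_def \<tau>3_def)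
  have it3: "\<tau>3 ` cbox u v = cbox (\<tau>3 u) (\<tau>3 v)" for u v
    unfolding image_inv_eq[of \<tau>3 \<sigma>3, OF t3s s3t] by (auto simp: mem_cbox3 \<sigma>3_def \<tau>3_def)
  have U2: "\<sigma>2 ` U3 = U3" unfolding image_inv_eq[of \<sigma>2 \<sigma>2, OF s22 s22]
    by (auto simp: U3_def mem_cbox3 \<sigma>2_def)
  have U3': "\<sigma>3 ` U3 = U3" unfolding image_inv_eq[of \<sigma>3 \<tau>3, OF s3t t3s]
    by (auto simp: U3_def mem_cbox3 \<sigma>3_def \<tau>3_def)
  have bnd2: "\<And>p. p \<in> U3 \<Longrightarrow> \<bar>g (\<sigma>2 p)\<bar> \<le> B" using bnd U2 by blast
  have bnd3: "\<And>p. p \<in> U3 \<Longrightarrow> \<bar>g (\<sigma>3 p)\<bar> \<le> B" using bnd U3' by blast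
  have cv2: "convex_on U3 (\<lambda>x. g (\<sigma>2 x))"
    by (rule convex_on_perm[OF cv]) (use U2 in \<open>auto simp: \<sigma>2_def\<close>)
  have cv3: "convex_on U3 (\<lambda>x. g (\<sigma>3 x))"
    by (rule convex_on_perm[OF cv]) (use U3' in \<open>auto simp: \<sigma>3_def\<close>)
  note P1 = pyr[OF cv bnd]
  note P2 = pyr[OF cv2 bnd2, unfolded \<sigma>2_def fst_conv snd_conv]
  note P3 = pyr[OF cv3 bnd3, unfolded \<sigma>3_def fst_conv snd_conv]
  have P1a: "(g has_integral integral {0..1} (\<lambda>s. s^2 * \<Phi>1 s)) D1" using P1(1) by (simp add: \<Phi>1_def)
  show "(\<lambda>s. s^2 * \<Phi>1 s) integrable_on {0..1}" "(\<lambda>s. s^2 * \<Phi>2 s) integrable_on {0..1}"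
    "(\<lambda>s. s^2 * \<Phi>3 s) integrable_on {0..1}" using P1(2) P2(2) P3(2) by (auto simp: \<Phi>1_def \<Phi>2_def \<Phi>3_def)
  have H2: "(g has_integral integral {0..1} (\<lambda>s. s^2 * \<Phi>2 s)) (\<sigma>2 ` D1)"
  proof (rule perm_transfer[where \<tau>=\<sigma>2, OF s22 s22])
    show "continuous (at x) \<sigma>2" for x unfolding \<sigma>2_def by (intro continuous_intros)
    show "\<exists>w z. \<sigma>2 ` cbox u v = cbox w z" for u v
      using i2 by blast
    then show "\<exists>w z. \<sigma>2 ` cbox u v = cbox w z" for u v .
    show "Henstock_Kurzweil_Integration.content (\<sigma>2 ` cbox u v) = Henstock_Kurzweil_Integration.content (cbox u v)" for u v
    proof -
      from i2 show ?thesis by (simp add: content3 \<sigma>2_def mult_ac)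
    qed
    show "\<sigma>2 ` U3 = U3" by (fact U2)
    show "D1 \<subseteq> U3" by (auto simp: D1_def)
    show "((\<lambda>x. g (\<sigma>2 x)) has_integral integral {0..1} (\<lambda>s. s\<^sup>2 * \<Phi>2 s)) D1"
      using P2(1) by (simp add: \<sigma>2_def \<Phi>2_def)
  qed
  have H3: "(g has_integral integral {0..1} (\<lambda>s. s^2 * \<Phi>3 s)) (\<sigma>3 ` D1)"
  proof (rule perm_transfer[where \<tau>=\<tau>3, OF s3t t3s])
    show "continuous (at x) \<tau>3" for x unfolding \<tau>3_def by (intro continuous_intros)
    show "\<exists>w z. \<sigma>3 ` cbox u v = cbox w z" for u v
      using i3 by blast
    show "\<exists>w z. \<tau>3 ` cbox u v = cbox w z" for u v
      using it3 by blast
    show "Henstock_Kurzweil_Integration.content (\<tau>3 ` cbox u v) = Henstock_Kurzweil_Integration.content (cbox u v)" for u v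
    proof -
      from it3 show ?thesis by (simp add: content3 \<tau>3_def mult_ac)
    qed
    show "\<sigma>3 ` U3 = U3" by (fact U3')
    show "D1 \<subseteq> U3" by (auto simp: D1_def)
    show "((\<lambda>x. g (\<sigma>3 x)) has_integral integral {0..1} (\<lambda>s. s\<^sup>2 * \<Phi>3 s)) D1"
      using P3(1) by (simp add: \<sigma>3_def \<Phi>3_def)
  qed
  let ?H = "\<lambda>a b c d. {p :: real \<times> real \<times> real. a * fst p + b * fst (snd p) + c * snd (snd p) = d}"
  have D2eq: "\<sigma>2 ` D1 = {x \<in> U3. fst x \<le> fst (snd x) \<and> snd (snd x) \<le> fst (snd x)}"
    unfolding image_inv_eq[of \<sigma>2 \<sigma>2, OF s22 s22] by (auto simp: D1_def U3_def mem_cbox3 \<sigma>2_def)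
  have D3eq: "\<sigma>3 ` D1 = {x \<in> U3. fst x \<le> snd (snd x) \<and> fst (snd x) \<le> snd (snd x)}"
    unfolding image_inv_eq[of \<sigma>3 \<tau>3, OF s3t t3s] by (auto simp: D1_def U3_def mem_cbox3 \<tau>3_def)
  have "D1 \<inter> \<sigma>2 ` D1 \<subseteq> ?H 1 (-1) 0 0" unfolding D2eq by (auto simp: D1_def)
  then have n12: "negligible (D1 \<inter> \<sigma>2 ` D1)"
    by (rule negligible_subset[OF negligible_hyperplane3[of 1 "-1" 0 0], rotated]) simp
  have "(D1 \<union> \<sigma>2 ` D1) \<inter> \<sigma>3 ` D1 \<subseteq> ?H 1 0 (-1) 0 \<union> ?H 0 1 (-1) 0" unfolding D2eq D3eq by (auto simp: D1_def)
  then have n123: "negligible ((D1 \<union> \<sigma>2 ` D1) \<inter> \<sigma>3 ` D1)"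
  proof -
    have "negligible (?H 1 0 (-1) 0 \<union> ?H 0 1 (-1) 0)"
      by (intro negligible_Un negligible_hyperplane3) auto
    then show ?thesis using \<open>(D1 \<union> \<sigma>2 ` D1) \<inter> \<sigma>3 ` D1 \<subseteq> ?H 1 0 (-1) 0 \<union> ?H 0 1 (-1) 0\<close>
      by (rule negligible_subset)
  qed
  have Ueq: "D1 \<union> \<sigma>2 ` D1 \<union> \<sigma>3 ` D1 = U3"
    unfolding D2eq D3eq by (auto simp: D1_def)
  show "(g has_integral (integral {0..1} (\<lambda>s. s^2 * \<Phi>1 s) + integral {0..1} (\<lambda>s. s^2 * \<Phi>2 s)
      + integral {0..1} (\<lambda>s. s^2 * \<Phi>3 s))) U3"
    unfolding Ueq[symmetric]
    by (intro has_integral_Un P1a H2 H3 n12 n123)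
qed


lemma U3_scale: "p \<in> U3 \<Longrightarrow> s \<in> {0..1} \<Longrightarrow> s *\<^sub>R p \<in> U3"
  by (auto simp: U3_def mem_cbox3 mult_le_one)

lemma Phi_props:
  fixes g :: "real \<times> real \<times> real \<Rightarrow> real" and e :: "real \<times> real \<Rightarrow> real \<times> real \<times> real"
  assumes cv: "convex_on U3 g" and bnd: "\<And>p. p \<in> U3 \<Longrightarrow> \<bar>g p\<bar> \<le> B"
    and eU: "\<And>q. q \<in> cbox (0,0) (1,1) \<Longrightarrow> e q \<in> U3"
    and eaff: "\<And>q1 q2 u v. u + v = 1 \<Longrightarrow> e (u *\<^sub>R q1 + v *\<^sub>R q2) = u *\<^sub>R e q1 + v *\<^sub>R e q2"
  defines "\<Phi> \<equiv> \<lambda>s. integral (cbox (0,0) (1,1)) (\<lambda>q. g (s *\<^sub>R e q))"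
  shows "convex_on {0..1} \<Phi>"
    and "\<And>s. s \<in> {0..1} \<Longrightarrow> \<Phi> s \<le> (1 - s) * g 0 + s * \<Phi> 1"
proof -
  have intg: "(\<lambda>q. g (s *\<^sub>R e q)) integrable_on cbox (0,0) (1,1)" if s: "s \<in> {0..1}" for s
  proof (rule convex_box_integrable)
    show "\<bar>g (s *\<^sub>R e q)\<bar> \<le> B" if "q \<in> cbox (0,0) (1,1)" for q
      using bnd U3_scale eU that s by blast
    show "convex_on (cbox (0,0) (1,1)) (\<lambda>q. g (s *\<^sub>R e q))"
      unfolding convex_on_def
    proof (intro conjI convex_box ballI allI impI)
      fix x y :: "real \<times> real" and u v :: real
      assume xy: "x \<in> cbox (0,0) (1,1)" "y \<in> cbox (0,0) (1,1)" and uv: "0 \<le> u" "0 \<le> v" "u + v = 1"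
      have "s *\<^sub>R e (u *\<^sub>R x + v *\<^sub>R y) = u *\<^sub>R (s *\<^sub>R e x) + v *\<^sub>R (s *\<^sub>R e y)"
        using eaff[OF uv(3)] by (simp add: algebra_simps)
      show "g (s *\<^sub>R e (u *\<^sub>R x + v *\<^sub>R y)) \<le> u * g (s *\<^sub>R e x) + v * g (s *\<^sub>R e y)"
      proof -
        have "g (u *\<^sub>R (s *\<^sub>R e x) + v *\<^sub>R (s *\<^sub>R e y)) \<le> u * g (s *\<^sub>R e x) + v * g (s *\<^sub>R e y)"
          using cv U3_scale[OF eU[OF xy(1)] s] U3_scale[OF eU[OF xy(2)] s] uv unfolding convex_on_def by blast
        with \<open>s *\<^sub>R e (u *\<^sub>R x + v *\<^sub>R y) = u *\<^sub>R (s *\<^sub>R e x) + v *\<^sub>R (s *\<^sub>R e y)\<close> show ?thesis by simp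
      qed
    qed
  qed
  show cvP: "convex_on {0..1} \<Phi>"
    unfolding convex_on_def
  proof (intro conjI convex_real_interval ballI allI impI)
    fix x y u v :: real
    assume xy: "x \<in> {0..1}" "y \<in> {0..1}" and uv: "0 \<le> u" "0 \<le> v" "u + v = 1"
    have le: "g ((u *\<^sub>R x + v *\<^sub>R y) *\<^sub>R e q) \<le> u * g (x *\<^sub>R e q) + v * g (y *\<^sub>R e q)"
      if q: "q \<in> cbox (0,0) (1,1)" for q
    proof -
      have "(u *\<^sub>R x + v *\<^sub>R y) *\<^sub>R e q = u *\<^sub>R (x *\<^sub>R e q) + v *\<^sub>R (y *\<^sub>R e q)"
        by (simp add: algebra_simps)
      moreover have "g (u *\<^sub>R (x *\<^sub>R e q) + v *\<^sub>R (y *\<^sub>R e q)) \<le> u * g (x *\<^sub>R e q) + v * g (y *\<^sub>R e q)"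
        using cv U3_scale[OF eU[OF q] xy(1)] U3_scale[OF eU[OF q] xy(2)] uv unfolding convex_on_def by blast
      ultimately show ?thesis by simp
    qed
    have i1: "(\<lambda>q. u * g (x *\<^sub>R e q)) integrable_on cbox (0,0) (1,1)"
      using integrable_cmul[OF intg[OF xy(1)], of u] by simp
    have i2: "(\<lambda>q. v * g (y *\<^sub>R e q)) integrable_on cbox (0,0) (1,1)"
      using integrable_cmul[OF intg[OF xy(2)], of v] by simp
    have "\<Phi> (u *\<^sub>R x + v *\<^sub>R y) \<le> integral (cbox (0,0) (1,1)) (\<lambda>q. u * g (x *\<^sub>R e q) + v * g (y *\<^sub>R e q))"
      unfolding \<Phi>_def
    proof (rule integral_le[OF intg _ le])
      show "u *\<^sub>R x + v *\<^sub>R y \<in> {0..1}" using convexD[OF convex_real_interval(5), of x 0 1 y u v] xy uv by auto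
      show "(\<lambda>q. u * g (x *\<^sub>R e q) + v * g (y *\<^sub>R e q)) integrable_on cbox (0, 0) (1, 1)"
        by (intro integrable_add i1 i2)
    qed
    also have "\<dots> = u * \<Phi> x + v * \<Phi> y"
      unfolding \<Phi>_def by (simp add: integral_add i1 i2 intg xy)
    finally show "\<Phi> (u *\<^sub>R x + v *\<^sub>R y) \<le> u * \<Phi> x + v * \<Phi> y" .
  qed
  have P0: "\<Phi> 0 = g 0" unfolding \<Phi>_def by (simp add: content_Pair)
  fix s :: real assume s: "s \<in> {0..1}"
  have "\<Phi> ((1 - s) *\<^sub>R 0 + s *\<^sub>R 1) \<le> (1 - s) * \<Phi> 0 + s * \<Phi> 1"
    using convex_onD[OF cvP, of s 0 1] s by auto
  then show "\<Phi> s \<le> (1 - s) * g 0 + s * \<Phi> 1" by (simp add: P0)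
qed

lemma weighted_upper:
  fixes \<phi> :: "real \<Rightarrow> real"
  assumes le: "\<And>s. s \<in> {0..1} \<Longrightarrow> \<phi> s \<le> (1 - s) * c + s * d"
    and int: "(\<lambda>s. s^2 * \<phi> s) integrable_on {0..1}"
  shows "integral {0..1} (\<lambda>s. s^2 * \<phi> s) \<le> c / 12 + d / 4"
proof -
  have h: "((\<lambda>s. c * s^2 - c * s^3 + d * s^3) has_integral (c * (1/3) - c * (1/4) + d * (1/4))) {0..1}"
    by (intro has_integral_diff has_integral_add has_integral_mult_right has_integral_pow01[of 2, simplified]
        has_integral_pow01[of 3, simplified])
  have "integral {0..1} (\<lambda>s. s^2 * \<phi> s) \<le> integral {0..1} (\<lambda>s. c * s^2 - c * s^3 + d * s^3)"
  proof (rule integral_le[OF int])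
    show "(\<lambda>s. c * s^2 - c * s^3 + d * s^3) integrable_on {0..1}" using h by blast
    fix s :: real assume s: "s \<in> {0..1}"
    have "s^2 * \<phi> s \<le> s^2 * ((1 - s) * c + s * d)"
      using le[OF s] by (intro mult_left_mono) auto
    then show "s^2 * \<phi> s \<le> c * s^2 - c * s^3 + d * s^3"
      by (simp add: algebra_simps power2_eq_square power3_eq_cube)
  qed
  then show ?thesis using integral_unique[OF h] by simp
qed




lemma absdet: fixes d n :: real assumes "d * d = (n^2)^3" "0 \<le> n" shows "\<bar>d\<bar> = n^3"
proof -
  have "\<bar>d\<bar>^2 = (n^3)^2" using assms(1) by (simp add: power2_eq_square power3_eq_cube abs_mult_self_eq)
  then show ?thesis by (rule power2_eq_imp_eq) (use assms in simp_all)
qed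

lemma det_cube:
  fixes u v w :: "real^3"
  assumes uv: "u \<bullet> v = 0" and uw: "u \<bullet> w = 0" and vw: "v \<bullet> w = 0"
    and nuv: "norm u = norm v" and nvw: "norm v = norm w"
  defines "M \<equiv> \<lambda>x::real^3. x$1 *\<^sub>R u + x$2 *\<^sub>R v + x$3 *\<^sub>R w"
  shows "linear M" and "\<bar>det (matrix M)\<bar> = norm u ^ 3"
proof -
  show lin: "linear M" unfolding M_def by (simp add: linear_iff algebra_simps)
  define X where "X = matrix M"
  define c where "c = (\<lambda>j. M (axis j 1))"
  have c1: "c 1 = u" and c2: "c 2 = v" and c3: "c 3 = w"
    by (simp_all add: c_def M_def axis_def)
  have TX: "(transpose X ** X) $ i $ j = c i \<bullet> c j" for i j
    by (simp add: matrix_matrix_mult_def transpose_def X_def matrix_def inner_vec_def c_def)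
  have cc: "c i \<bullet> c j = (if i = j then (norm u)^2 else 0)" for i j
  proof -
    have vv: "v \<bullet> v = (norm u)^2" "w \<bullet> w = (norm u)^2" "u \<bullet> u = (norm u)^2"
      apply (simp only: nuv power2_norm_eq_inner)
      apply (simp only: nuv nvw power2_norm_eq_inner)
      apply (simp only: power2_norm_eq_inner)
      done
    show ?thesis
      using exhaust_3[of i] exhaust_3[of j]
      apply (elim disjE)
      apply (simp_all add: c1 c2 c3 uv uw vw vv inner_commute)
      done
  qed
  have "det (transpose X ** X) = (\<Prod>i\<in>UNIV. (transpose X ** X) $ i $ i)"
    by (rule det_diagonal) (simp only: TX cc if_False)
  also have "\<dots> = ((norm u)^2)^3"
    by (simp only: TX cc if_True prod_constant) simp
  finally have "det X * det X = ((norm u)^2)^3"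
    by (simp add: det_mul det_transpose)
  then show "\<bar>det (matrix M)\<bar> = norm u ^ 3" unfolding X_def by (rule absdet) simp
qed


lemma prod_UNIV_3: "(\<Prod>i\<in>(UNIV::3 set). f i) = (f 1 * f 2 * f 3 :: real)"
  unfolding UNIV_3 by (simp add: mult.assoc)

lemma content_cart3:
  fixes u v :: "real^3"
  shows "Henstock_Kurzweil_Integration.content (cbox u v) =
    (if u$1 \<le> v$1 then v$1 - u$1 else 0) * ((if u$2 \<le> v$2 then v$2 - u$2 else 0) * (if u$3 \<le> v$3 then v$3 - u$3 else 0))"
proof (cases "u$1 \<le> v$1 \<and> u$2 \<le> v$2 \<and> u$3 \<le> v$3")
  case True
  then have "\<forall>i. u$i \<le> v$i" by (simp add: forall_3)
  then have "cbox u v \<noteq> {}" using mem_box_cart(2)[of u u v] by auto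
  then show ?thesis using True by (simp add: content_cbox_cart prod_UNIV_3 mult.assoc)
next
  case False
  then have "\<not> (\<forall>i. u$i \<le> v$i)" by (simp add: forall_3)
  then have "cbox u v = {}" unfolding mem_box_cart(2) set_eq_iff by (meson dual_order.trans empty_iff mem_box_cart(2))
  moreover have "(if u$1 \<le> v$1 then v$1 - u$1 else 0) * ((if u$2 \<le> v$2 then v$2 - u$2 else 0) * (if u$3 \<le> v$3 then v$3 - u$3 else 0)) = 0"
    using False by auto
  ultimately show ?thesis by simp
qed

lemma cube_cov:
  fixes A u v w :: "real^3" and h :: "real^3 \<Rightarrow> real"
  assumes uv: "u \<bullet> v = 0" and uw: "u \<bullet> w = 0" and vw: "v \<bullet> w = 0"
    and nuv: "norm u = norm v" and nvw: "norm v = norm w" and u0: "u \<noteq> 0"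
    and hint: "((\<lambda>p. h (A + fst p *\<^sub>R u + fst (snd p) *\<^sub>R v + snd (snd p) *\<^sub>R w)) has_integral J) U3"
    and hb: "\<And>p. p \<in> U3 \<Longrightarrow> \<bar>h (A + fst p *\<^sub>R u + fst (snd p) *\<^sub>R v + snd (snd p) *\<^sub>R w)\<bar> \<le> B"
  shows "(h has_integral (norm u ^ 3 * J)) ((\<lambda>p. A + fst p *\<^sub>R u + fst (snd p) *\<^sub>R v + snd (snd p) *\<^sub>R w) ` U3)"
proof -
  define M where "M = (\<lambda>x::real^3. x$1 *\<^sub>R u + x$2 *\<^sub>R v + x$3 *\<^sub>R w)"
  define Aff where "Aff = (\<lambda>x. M x + A)"
  define Lp where "Lp = (\<lambda>p::real \<times> real \<times> real. A + fst p *\<^sub>R u + fst (snd p) *\<^sub>R v + snd (snd p) *\<^sub>R w)"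
  define T where "T = (\<lambda>x::real^3. (x$1, x$2, x$3))"
  define T' where "T' = (\<lambda>p::real \<times> real \<times> real. vector [fst p, fst (snd p), snd (snd p)] :: real^3)"
  note dc = det_cube[OF uv uw vw nuv nvw, folded M_def]
  define d where "d = \<bar>det (matrix M)\<bar>"
  have d: "d = norm u ^ 3" using dc(2) by (simp add: d_def)
  have TT': "T (T' p) = p" for p by (simp add: T_def T'_def)
  have T'T: "T' (T x) = x" for x by (simp add: T_def T'_def vec_eq_iff forall_3)
  have LA: "Lp (T x) = Aff x" for x by (simp add: Lp_def Aff_def M_def T_def algebra_simps)
  have ALp: "Aff (T' p) = Lp p" for p using LA[of "T' p"] TT' by simp
  define S where "S = T' ` U3"
  have Seq: "S = cbox (vec 0) (vec 1)"
    unfolding S_def image_inv_eq[of T' T, OF T'T TT']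
    by (auto simp: mem_box_cart(2) forall_3 U3_def mem_cbox3 T_def)
  have Sl: "S \<in> lmeasurable" unfolding Seq by (rule lmeasurable_cbox)
  have contT: "continuous (at x) T" for x unfolding T_def by (intro continuous_intros)
  have iT: "T ` cbox a b = cbox (T a) (T b)" for a b
    unfolding image_inv_eq[of T T', OF TT' T'T]
    by (auto simp: mem_box_cart(2) forall_3 mem_cbox3 T_def T'_def)
  have iT': "T' ` cbox a b = cbox (T' a) (T' b)" for a b
    unfolding image_inv_eq[of T' T, OF T'T TT']
    by (auto simp: mem_box_cart(2) forall_3 mem_cbox3 T_def T'_def)
  have cT: "Henstock_Kurzweil_Integration.content (T ` cbox a b) = 1 * Henstock_Kurzweil_Integration.content (cbox a b)" for a b
    unfolding iT content3 content_cart3 by (simp add: T_def content_real_if)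
  have hint': "((\<lambda>p. h (Lp p)) has_integral J) (cbox (0,0,0) (1,1,1))"
    using hint by (simp add: Lp_def U3_def)
  have "((\<lambda>x. h (Lp (T x))) has_integral (1/1) *\<^sub>R J) (T' ` cbox (0,0,0) (1,1,1))"
    by (rule has_integral_twiddle[where g=T and h=T' and r=1, OF _ T'T TT' contT _ _ cT hint'])
       (simp, use iT in blast, use iT' in blast)
  then have I1: "((\<lambda>x. h (Aff x)) has_integral J) S" by (simp add: LA S_def U3_def)
  have hbS: "\<bar>h (Aff x)\<bar> \<le> B" if xS: "x \<in> S" for x
  proof -
    obtain p where "p \<in> U3" "x = T' p" using xS unfolding S_def by blast
    then show ?thesis using hb[of p] ALp by (simp add: Lp_def)
  qed
  have AI: "(\<lambda>x. h (Aff x)) absolutely_integrable_on S"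
    by (rule absolutely_integrable_integrable_bound[where g="\<lambda>_. B"]) (use hbS I1 integrable_on_const[OF Sl] in auto)
  define L where "L = (\<lambda>y::real. d *\<^sub>R (vec y :: real^1))"
  have "linear L" unfolding L_def by (simp add: linear_iff vec_add vec_scaleR algebra_simps)
  then have bl: "bounded_linear L" by (simp add: linear_conv_bounded_linear)
  have AI2: "(\<lambda>x. d *\<^sub>R (vec (h (Aff x)) :: real^1)) absolutely_integrable_on S"
    using absolutely_integrable_linear[OF AI bl] by (simp add: L_def o_def)
  have I2: "integral S (\<lambda>x. d *\<^sub>R (vec (h (Aff x)) :: real^1)) = d *\<^sub>R vec J"
    using has_integral_linear[OF I1 bl] unfolding L_def o_def by (rule integral_unique)
  have der: "(Aff has_derivative M) (at x within S)" for x
    unfolding Aff_def by (rule has_derivative_add_const) (rule linear_imp_has_derivative[OF dc(1)])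
  have "det (matrix M) \<noteq> 0" using d u0 d_def by auto
  then have "inj M" using det_nz_iff_inj[OF dc(1)] by blast
  then have inj: "inj_on Aff S" unfolding Aff_def by (auto simp: inj_on_def inj_def)
  have lS: "S \<in> sets lebesgue" using Sl by (simp add: fmeasurableD)
  have CV: "(\<lambda>y. vec (h y) :: real^1) absolutely_integrable_on (Aff ` S) \<and> integral (Aff ` S) (\<lambda>y. vec (h y) :: real^1) = d *\<^sub>R vec J"
    using has_absolute_integral_change_of_variables[OF lS der inj, of "\<lambda>y. vec (h y) :: real^1" "d *\<^sub>R vec J"] AI2 I2
    by (simp add: d_def)
  then have "((\<lambda>y. vec (h y) :: real^1) has_integral d *\<^sub>R vec J) (Aff ` S)"
    using absolutely_integrable_on_def has_integral_integrable_integral by blast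
  from has_integral_linear[OF this bounded_linear_vec_nth[of 1]]
  have "(h has_integral d * J) (Aff ` S)" by (simp add: o_def)
  moreover have "Aff ` S = Lp ` U3" unfolding S_def image_image ALp ..
  ultimately show ?thesis by (simp add: d Lp_def)
qed


lemma convex_U3_bounded:
  fixes g :: "real \<times> real \<times> real \<Rightarrow> real"
  assumes cv: "convex_on U3 g"
  obtains B where "\<And>p. p \<in> U3 \<Longrightarrow> \<bar>g p\<bar> \<le> B"
proof -
  define V where "V = ({0,1} \<times> {0,1} \<times> {0,1} :: (real \<times> real \<times> real) set)"
  define M where "M = Max (g ` V)"
  have finV: "finite V" by (simp add: V_def)
  have VM: "g p \<le> M" if "p \<in> V" for p unfolding M_def using finV that by (intro Max_ge) auto
  have step: "g ((1 - s) *\<^sub>R p + s *\<^sub>R q) \<le> max (g p) (g q)"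
    if "p \<in> U3" "q \<in> U3" "0 \<le> s" "s \<le> 1" for p q s
  proof -
    have "g ((1 - s) *\<^sub>R p + s *\<^sub>R q) \<le> (1 - s) * g p + s * g q"
      using convex_onD[OF cv, of s p q] that by auto
    also have "\<dots> \<le> (1 - s) * max (g p) (g q) + s * max (g p) (g q)"
      using that by (intro add_mono mult_left_mono) auto
    finally show ?thesis by (simp add: algebra_simps)
  qed
  have in01: "x \<in> {0,1} \<Longrightarrow> x \<in> {0..1}" for x :: real by auto
  have L3: "g (a, b, r) \<le> M" if "a \<in> {0,1}" "b \<in> {0,1}" "r \<in> {0..1}" for a b r
  proof -
    have "g ((1 - r) *\<^sub>R (a, b, 0) + r *\<^sub>R (a, b, 1)) \<le> max (g (a, b, 0)) (g (a, b, 1))"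
      using that by (intro step) (auto simp: U3_def mem_cbox3)
    moreover have "(1 - r) *\<^sub>R (a, b, 0) + r *\<^sub>R (a, b, 1) = (a, b, r)"
      by (simp add: algebra_simps)
    moreover have "g (a, b, 0) \<le> M" "g (a, b, 1) \<le> M" using that VM by (auto simp: V_def)
    ultimately show ?thesis by simp
  qed
  have L2: "g (a, t, r) \<le> M" if "a \<in> {0,1}" "t \<in> {0..1}" "r \<in> {0..1}" for a t r
  proof -
    have "g ((1 - t) *\<^sub>R (a, 0, r) + t *\<^sub>R (a, 1, r)) \<le> max (g (a, 0, r)) (g (a, 1, r))"
      using that by (intro step) (auto simp: U3_def mem_cbox3)
    moreover have "(1 - t) *\<^sub>R (a, 0, r) + t *\<^sub>R (a, 1, r) = (a, t, r)"
      by (simp add: algebra_simps)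
    moreover have "g (a, 0, r) \<le> M" "g (a, 1, r) \<le> M" using that L3 by auto
    ultimately show ?thesis by simp
  qed
  have upper: "g p \<le> M" if p: "p \<in> U3" for p
  proof -
    obtain s t r where pe: "p = (s, t, r)" by (cases p) auto
    have str: "s \<in> {0..1}" "t \<in> {0..1}" "r \<in> {0..1}" using p by (auto simp: pe U3_def mem_cbox3)
    have "g ((1 - s) *\<^sub>R (0, t, r) + s *\<^sub>R (1, t, r)) \<le> max (g (0, t, r)) (g (1, t, r))"
      using str by (intro step) (auto simp: U3_def mem_cbox3)
    moreover have "(1 - s) *\<^sub>R (0, t, r) + s *\<^sub>R (1, t, r) = (s, t, r)"
      by (simp add: algebra_simps)
    moreover have "g (0, t, r) \<le> M" "g (1, t, r) \<le> M" using str L2 by auto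
    ultimately show ?thesis by (simp add: pe)
  qed
  define c where "c = (1/2 :: real, 1/2 :: real, 1/2 :: real)"
  have lower: "2 * g c - M \<le> g p" if p: "p \<in> U3" for p
  proof -
    define p' where "p' = (1 - fst p, 1 - fst (snd p), 1 - snd (snd p))"
    have p'U: "p' \<in> U3" using p by (auto simp: p'_def U3_def mem_cbox3)
    have "(1 - 1/2) *\<^sub>R p + (1/2) *\<^sub>R p' = c"
      by (auto simp: p'_def c_def prod_eq_iff field_simps)
    moreover have "g ((1 - 1/2) *\<^sub>R p + (1/2) *\<^sub>R p') \<le> (1 - 1/2) * g p + (1/2) * g p'"
      using convex_onD[OF cv, of "1/2" p p'] p p'U by auto
    ultimately have "g c \<le> g p / 2 + g p' / 2" by simp
    moreover have "g p' \<le> M" using upper[OF p'U] .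
    ultimately show ?thesis by simp
  qed
  show ?thesis
  proof (rule that[of "\<bar>M\<bar> + 2 * \<bar>g c\<bar>"])
    fix p assume "p \<in> U3"
    then show "\<bar>g p\<bar> \<le> \<bar>M\<bar> + 2 * \<bar>g c\<bar>" using upper lower by fastforce
  qed
qed

lemma cancel3:
  fixes c x y z :: real
  assumes "c \<noteq> 0"
  shows "(c * x + c * y + c * z) / (c + c + c) = (x + y + z) / 3"
proof -
  have "(c * x + c * y + c * z) / (c + c + c) = (c * (x + y + z)) / (c * 3)"
    by (simp add: algebra_simps)
  also have "\<dots> = (x + y + z) / 3" using assms by simp
  finally show ?thesis .
qed

theorem theorem8p4:
  fixes A u v w :: "real^3" and f :: "real^3 \<Rightarrow> real"
  assumes "u \<bullet> v = 0" and "u \<bullet> w = 0" and "v \<bullet> w = 0"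
    and "norm u = norm v" and "norm v = norm w" and "u \<noteq> 0"
    and "convex_on (cube A u v w) f"
  shows "vol_avg f (cube A u v w) \<le> 1/4 * f A + 3/4 * surface_avg f (far_faces A u v w)
       \<and> surface_avg f (map (homothety_face A (3/4)) (far_faces A u v w)) \<le> vol_avg f (cube A u v w)"
proof -
  note uv = assms(1) and uw = assms(2) and vw = assms(3) and nuv = assms(4) and nvw = assms(5)
    and u0 = assms(6) and cvf = assms(7)
  define a where "a = norm u"
  have a0: "a > 0" using u0 by (simp add: a_def)
  define Lp where "Lp = (\<lambda>p::real \<times> real \<times> real. A + fst p *\<^sub>R u + fst (snd p) *\<^sub>R v + snd (snd p) *\<^sub>R w)"
  define G where "G = (\<lambda>p. f (Lp p))"
  have cubeeq: "cube A u v w = Lp ` U3"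
  proof
    show "cube A u v w \<subseteq> Lp ` U3"
    proof
      fix x assume "x \<in> cube A u v w"
      then obtain s t r where x: "x = A + s *\<^sub>R u + t *\<^sub>R v + r *\<^sub>R w" "s \<in> {0..1}" "t \<in> {0..1}" "r \<in> {0..1}"
        unfolding cube_def by blast
      show "x \<in> Lp ` U3"
        by (rule image_eqI[of _ _ "(s, t, r)"]) (use x in \<open>auto simp: Lp_def U3_def mem_cbox3\<close>)
    qed
    show "Lp ` U3 \<subseteq> cube A u v w"
      unfolding cube_def by (auto simp: Lp_def U3_def mem_cbox3) blast
  qed
  have LpU: "p \<in> U3 \<Longrightarrow> Lp p \<in> cube A u v w" for p using cubeeq by blast
  have Lplin: "Lp (x *\<^sub>R p + y *\<^sub>R q) = x *\<^sub>R Lp p + y *\<^sub>R Lp q" if "x + y = 1" for x y p q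
  proof -
    have "A = x *\<^sub>R A + y *\<^sub>R A" using that by (simp add: scaleR_add_left[symmetric])
    then show ?thesis by (simp add: Lp_def algebra_simps)
  qed
  have cvG: "convex_on U3 G"
    unfolding convex_on_def
  proof (intro conjI ballI allI impI)
    show "convex U3" by (simp add: U3_def)
    fix x y :: "real \<times> real \<times> real" and s t :: real
    assume xy: "x \<in> U3" "y \<in> U3" and st: "0 \<le> s" "0 \<le> t" "s + t = 1"
    have "f (s *\<^sub>R Lp x + t *\<^sub>R Lp y) \<le> s * f (Lp x) + t * f (Lp y)"
      using cvf LpU[OF xy(1)] LpU[OF xy(2)] st unfolding convex_on_def by blast
    then show "G (s *\<^sub>R x + t *\<^sub>R y) \<le> s * G x + t * G y"
      by (simp add: G_def Lplin[OF st(3)])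
  qed
  obtain B where bnd: "\<And>p. p \<in> U3 \<Longrightarrow> \<bar>G p\<bar> \<le> B" using convex_U3_bounded[OF cvG] by blast
  define \<Phi>1 where "\<Phi>1 = (\<lambda>s. integral (cbox (0,0) (1,1)) (\<lambda>q. G (s, s * fst q, s * snd q)))"
  define \<Phi>2 where "\<Phi>2 = (\<lambda>s. integral (cbox (0,0) (1,1)) (\<lambda>q. G (s * fst q, s, s * snd q)))"
  define \<Phi>3 where "\<Phi>3 = (\<lambda>s. integral (cbox (0,0) (1,1)) (\<lambda>q. G (s * fst q, s * snd q, s)))"
  note C = core[OF cvG bnd, folded \<Phi>1_def \<Phi>2_def \<Phi>3_def]
  define I1 where "I1 = integral {0..1} (\<lambda>s. s^2 * \<Phi>1 s)"
  define I2 where "I2 = integral {0..1} (\<lambda>s. s^2 * \<Phi>2 s)"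
  define I3 where "I3 = integral {0..1} (\<lambda>s. s^2 * \<Phi>3 s)"
  have int1: "(\<lambda>s. s^2 * \<Phi>1 s) integrable_on {0..1}" using C(2) by (simp add: \<Phi>1_def)
  have int2: "(\<lambda>s. s^2 * \<Phi>2 s) integrable_on {0..1}" using C(3) by (simp add: \<Phi>2_def)
  have int3: "(\<lambda>s. s^2 * \<Phi>3 s) integrable_on {0..1}" using C(4) by (simp add: \<Phi>3_def)
  have GJ: "(G has_integral (I1 + I2 + I3)) U3" using C(1) by (simp add: \<Phi>1_def \<Phi>2_def \<Phi>3_def I1_def I2_def I3_def)
  have PP1: "convex_on {0..1} \<Phi>1" "\<And>s. s \<in> {0..1} \<Longrightarrow> \<Phi>1 s \<le> (1 - s) * G 0 + s * \<Phi>1 1"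
  proof -
    have e: "\<Phi>1 = (\<lambda>s. integral (cbox (0,0) (1,1)) (\<lambda>q. G (s *\<^sub>R (\<lambda>q. (1, fst q, snd q)) q)))"
      by (simp add: \<Phi>1_def scaleR_prod_def)
    have eU: "\<And>q. q \<in> cbox (0,0) (1,1) \<Longrightarrow> (\<lambda>q. (1, fst q, snd q)) q \<in> U3"
      by (auto simp: U3_def mem_cbox3 cbox_Pair_eq)
    have eaff: "\<And>q1 q2 x y. x + y = 1 \<Longrightarrow> (\<lambda>q. (1, fst q, snd q)) (x *\<^sub>R q1 + y *\<^sub>R q2) = x *\<^sub>R (\<lambda>q. (1, fst q, snd q)) q1 + y *\<^sub>R (\<lambda>q. (1, fst q, snd q)) q2"
      by (auto simp: algebra_simps scaleR_add_left[symmetric])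
    show "convex_on {0..1} \<Phi>1" using Phi_props(1)[OF cvG bnd eU eaff] unfolding e .
    show "\<And>s. s \<in> {0..1} \<Longrightarrow> \<Phi>1 s \<le> (1 - s) * G 0 + s * \<Phi>1 1"
      using Phi_props(2)[OF cvG bnd eU eaff] by (simp add: \<Phi>1_def scaleR_prod_def)
  qed
  have PP2: "convex_on {0..1} \<Phi>2" "\<And>s. s \<in> {0..1} \<Longrightarrow> \<Phi>2 s \<le> (1 - s) * G 0 + s * \<Phi>2 1"
  proof -
    have e: "\<Phi>2 = (\<lambda>s. integral (cbox (0,0) (1,1)) (\<lambda>q. G (s *\<^sub>R (\<lambda>q. (fst q, 1, snd q)) q)))"
      by (simp add: \<Phi>2_def scaleR_prod_def)
    have eU: "\<And>q. q \<in> cbox (0,0) (1,1) \<Longrightarrow> (\<lambda>q. (fst q, 1, snd q)) q \<in> U3"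
      by (auto simp: U3_def mem_cbox3 cbox_Pair_eq)
    have eaff: "\<And>q1 q2 x y. x + y = 1 \<Longrightarrow> (\<lambda>q. (fst q, 1, snd q)) (x *\<^sub>R q1 + y *\<^sub>R q2) = x *\<^sub>R (\<lambda>q. (fst q, 1, snd q)) q1 + y *\<^sub>R (\<lambda>q. (fst q, 1, snd q)) q2"
      by (auto simp: algebra_simps scaleR_add_left[symmetric])
    show "convex_on {0..1} \<Phi>2" using Phi_props(1)[OF cvG bnd eU eaff] unfolding e .
    show "\<And>s. s \<in> {0..1} \<Longrightarrow> \<Phi>2 s \<le> (1 - s) * G 0 + s * \<Phi>2 1"
      using Phi_props(2)[OF cvG bnd eU eaff] by (simp add: \<Phi>2_def scaleR_prod_def)
  qed
  have PP3: "convex_on {0..1} \<Phi>3" "\<And>s. s \<in> {0..1} \<Longrightarrow> \<Phi>3 s \<le> (1 - s) * G 0 + s * \<Phi>3 1"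
  proof -
    have e: "\<Phi>3 = (\<lambda>s. integral (cbox (0,0) (1,1)) (\<lambda>q. G (s *\<^sub>R (\<lambda>q. (fst q, snd q, 1)) q)))"
      by (simp add: \<Phi>3_def scaleR_prod_def)
    have eU: "\<And>q. q \<in> cbox (0,0) (1,1) \<Longrightarrow> (\<lambda>q. (fst q, snd q, 1)) q \<in> U3"
      by (auto simp: U3_def mem_cbox3 cbox_Pair_eq)
    have eaff: "\<And>q1 q2 x y. x + y = 1 \<Longrightarrow> (\<lambda>q. (fst q, snd q, 1)) (x *\<^sub>R q1 + y *\<^sub>R q2) = x *\<^sub>R (\<lambda>q. (fst q, snd q, 1)) q1 + y *\<^sub>R (\<lambda>q. (fst q, snd q, 1)) q2"
      by (auto simp: algebra_simps scaleR_add_left[symmetric])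
    show "convex_on {0..1} \<Phi>3" using Phi_props(1)[OF cvG bnd eU eaff] unfolding e .
    show "\<And>s. s \<in> {0..1} \<Longrightarrow> \<Phi>3 s \<le> (1 - s) * G 0 + s * \<Phi>3 1"
      using Phi_props(2)[OF cvG bnd eU eaff] by (simp add: \<Phi>3_def scaleR_prod_def)
  qed
  have G0: "G 0 = f A" by (simp add: G_def Lp_def)
  have fcube: "(f has_integral (a ^ 3 * (I1 + I2 + I3))) (cube A u v w)"
    unfolding cubeeq Lp_def a_def
    by (rule cube_cov[OF uv uw vw nuv nvw u0, of f]) (use GJ bnd in \<open>auto simp: G_def Lp_def\<close>)
  have one: "((\<lambda>p. 1::real) has_integral 1) U3"
    using has_integral_const[of "1::real" "(0::real,0::real,0::real)" "(1,1,1)"] by (simp add: U3_def content3)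
  have mcube: "((\<lambda>x. 1::real) has_integral (a ^ 3 * 1)) (cube A u v w)"
    unfolding cubeeq Lp_def a_def
    by (rule cube_cov[OF uv uw vw nuv nvw u0, of "\<lambda>_. 1"]) (use one in auto)
  have "compact (cube A u v w)"
    unfolding cubeeq Lp_def U3_def by (intro compact_continuous_image continuous_intros compact_cbox)
  then have lm: "cube A u v w \<in> lmeasurable" by (rule lmeasurable_compact)
  have meas: "measure lebesgue (cube A u v w) = a ^ 3"
    using lmeasure_integral[OF lm] integral_unique[OF mcube] by simp
  have vol: "vol_avg f (cube A u v w) = I1 + I2 + I3"
    unfolding vol_avg_def meas using integral_unique[OF fcube] a0 by simp
  have nv: "norm v = a" and nw: "norm w = a" using nuv nvw by (simp_all add: a_def)
  have vu: "v \<bullet> u = 0" "w \<bullet> u = 0" "w \<bullet> v = 0" using uv uw vw by (simp_all add: inner_commute)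
  have ar: "face_area (P, x, y) = b^2" if "x \<bullet> y = 0" "norm x = b" "norm y = b" "0 \<le> b" for P x y b
  proof -
    have e: "(norm x)\<^sup>2 * (norm y)\<^sup>2 - (x \<bullet> y)\<^sup>2 = (b^2)^2" using that by (simp add: power2_eq_square)
    show ?thesis unfolding face_area_def by (simp only: split e real_sqrt_abs abs_power2)
  qed
  have a1: "face_area (A + u, v, w) = a^2" by (rule ar) (use vw nv nw a0 in auto)
  have a2: "face_area (A + v, u, w) = a^2" by (rule ar) (use uw nw a0 in \<open>auto simp: a_def\<close>)
  have a3: "face_area (A + w, u, v) = a^2" by (rule ar) (use uv nv a0 in \<open>auto simp: a_def\<close>)
  have hf: "homothety_face A (3/4) (P, x, y) = (homothety A (3/4) P, (3/4) *\<^sub>R x, (3/4) *\<^sub>R y)" for P x y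
    by (simp add: homothety_face_def)
  have b1: "face_area (homothety_face A (3/4) (A + u, v, w)) = (3/4 * a)^2" unfolding hf
    by (rule ar) (use vw nv nw a0 in auto)
  have b2: "face_area (homothety_face A (3/4) (A + v, u, w)) = (3/4 * a)^2" unfolding hf
    by (rule ar) (use uw nw a0 in \<open>auto simp: a_def\<close>)
  have b3: "face_area (homothety_face A (3/4) (A + w, u, v)) = (3/4 * a)^2" unfolding hf
    by (rule ar) (use uv nv a0 in \<open>auto simp: a_def\<close>)
  have F1: "integral (cbox (0,0) (1,1)) (\<lambda>st. f (face_param (A + u, v, w) st)) = \<Phi>1 1"
    unfolding \<Phi>1_def G_def Lp_def by (rule integral_cong) (simp add: face_param_def algebra_simps)
  have F2: "integral (cbox (0,0) (1,1)) (\<lambda>st. f (face_param (A + v, u, w) st)) = \<Phi>2 1"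
    unfolding \<Phi>2_def G_def Lp_def by (rule integral_cong) (simp add: face_param_def algebra_simps)
  have F3: "integral (cbox (0,0) (1,1)) (\<lambda>st. f (face_param (A + w, u, v) st)) = \<Phi>3 1"
    unfolding \<Phi>3_def G_def Lp_def by (rule integral_cong) (simp add: face_param_def algebra_simps)
  have H1: "integral (cbox (0,0) (1,1)) (\<lambda>st. f (face_param (homothety_face A (3/4) (A + u, v, w)) st)) = \<Phi>1 (3/4)"
    unfolding \<Phi>1_def G_def Lp_def face_param_homothety
    by (rule integral_cong) (simp add: face_param_def homothety_def algebra_simps)
  have H2: "integral (cbox (0,0) (1,1)) (\<lambda>st. f (face_param (homothety_face A (3/4) (A + v, u, w)) st)) = \<Phi>2 (3/4)"
    unfolding \<Phi>2_def G_def Lp_def face_param_homothety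
    by (rule integral_cong) (simp add: face_param_def homothety_def algebra_simps)
  have H3: "integral (cbox (0,0) (1,1)) (\<lambda>st. f (face_param (homothety_face A (3/4) (A + w, u, v)) st)) = \<Phi>3 (3/4)"
    unfolding \<Phi>3_def G_def Lp_def face_param_homothety
    by (rule integral_cong) (simp add: face_param_def homothety_def algebra_simps)
  have sa1: "surface_avg f (far_faces A u v w) = (\<Phi>1 1 + \<Phi>2 1 + \<Phi>3 1) / 3"
  proof -
    have eq: "surface_avg f (far_faces A u v w) = (a^2 * \<Phi>1 1 + a^2 * \<Phi>2 1 + a^2 * \<Phi>3 1) / (a^2 + a^2 + a^2)"
      unfolding surface_avg_def far_faces_def face_integral_def[abs_def]
      by (simp only: list.map sum_list_simps a1 a2 a3 F1 F2 F3 add_0_right add.assoc)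
    have nz: "a^2 \<noteq> 0" using a0 by simp
    show ?thesis unfolding eq cancel3[OF nz] by (rule refl)
  qed
  have sa2: "surface_avg f (map (homothety_face A (3/4)) (far_faces A u v w)) = (\<Phi>1 (3/4) + \<Phi>2 (3/4) + \<Phi>3 (3/4)) / 3"
  proof -
    have eq: "surface_avg f (map (homothety_face A (3/4)) (far_faces A u v w)) =
      ((3/4*a)^2 * \<Phi>1 (3/4) + (3/4*a)^2 * \<Phi>2 (3/4) + (3/4*a)^2 * \<Phi>3 (3/4)) / ((3/4*a)^2 + (3/4*a)^2 + (3/4*a)^2)"
      unfolding surface_avg_def far_faces_def face_integral_def[abs_def]
      by (simp only: list.map sum_list_simps b1 b2 b3 H1 H2 H3 add_0_right add.assoc)
    have nz: "(3/4*a)^2 \<noteq> 0" using a0 by simp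
    show ?thesis unfolding eq cancel3[OF nz] by (rule refl)
  qed
  have u1: "I1 \<le> f A / 12 + \<Phi>1 1 / 4" unfolding I1_def by (rule weighted_upper[OF _ int1]) (use PP1(2) G0 in auto)
  have u2: "I2 \<le> f A / 12 + \<Phi>2 1 / 4" unfolding I2_def by (rule weighted_upper[OF _ int2]) (use PP2(2) G0 in auto)
  have u3: "I3 \<le> f A / 12 + \<Phi>3 1 / 4" unfolding I3_def by (rule weighted_upper[OF _ int3]) (use PP3(2) G0 in auto)
  have j1: "\<Phi>1 (3/4) \<le> 3 * I1" unfolding I1_def by (rule jensen34[OF PP1(1) int1])
  have j2: "\<Phi>2 (3/4) \<le> 3 * I2" unfolding I2_def by (rule jensen34[OF PP2(1) int2])
  have j3: "\<Phi>3 (3/4) \<le> 3 * I3" unfolding I3_def by (rule jensen34[OF PP3(1) int3])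
  show ?thesis unfolding vol sa1 sa2 using u1 u2 u3 j1 j2 j3 by (simp add: field_simps)
qed

end
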